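(* Under the setting below, every nonzero element $\bar x$ of $\mathcal C$ satisfies $\sum_{i=1}^r\bar x_i=\frac12(n-1)$. Equivalently, after subtracting a constant from the superpotential $u$ (which removes $0$ from $\mathcal C$ and leaves a superpotential), $\mathcal C$ lies in the hyperplane $\{\bar x:\sum_i\bar x_i=\frac12(n-1)\}$.
   Context: Let $G$ be a compact Lie group, $K\subset G$ a closed subgroup with $G/K$ connected and almost effective, and $\mathfrak p=\mathfrak p_1\oplus\cdots\oplus\mathfrak p_r$ ($r\ge2$) an $\mathrm{Ad}(K)$-invariant decomposition of the isotropy representation into pairwise inequivalent $\mathbb R$-irreducible summands; $d_i=\dim\mathfrak p_i$, $d=(d_1,\dots,d_r)$, $n=\sum d_i$. For $q\in\mathbb R^r$ the $G$-invariant metric equal to $e^{q_i}Q$ on $\mathfrak p_i$ ($Q$ fixed bi-invariant) has scalar curvature $S(q)=\sum_{w\in\mathcal W}A_we^{w\cdot q}$ with $\mathcal W\subset\mathbb Z^r$ finite and constants $A_w\ne0$; each $w\in\mathcal W$ is of type I (one entry $-1$, rest $0$), type II (one entry $1$, two entries $-1$, rest $0$) or type III (one entry $1$, one entry $-2$, rest $0$), and $A_w>0$ for type I, $A_w<0$ for types II, III. Assume $\dim\operatorname{conv}(\mathcal W)=r-1$. $J$ is the symmetric bilinear form on $\mathbb R^r$ with $J(p,p)=\frac1{n-1}(\sum p_i)^2-\sum p_i^2/d_i$. Assume $u(q)=\sum_{\bar c\in\mathcal C}F_{\bar c}e^{\bar c\cdot q}$ ($\mathcal C\subset\mathbb R^r$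 finite, $F_{\bar c}\neq0$) is a superpotential, i.e. $J(\nabla u,\nabla u)=e^{d\cdot q}S(q)$; equivalently, for every $\xi\in\mathbb R^r$, $\sum_{(\bar a,\bar c)\in\mathcal C\times\mathcal C,\ \bar a+\bar c=\xi}J(\bar a,\bar c)F_{\bar a}F_{\bar c}$ equals $A_w$ if $\xi=d+w$ with $w\in\mathcal W$ and $0$ otherwise. *)

theory Defs
  imports "HOL-Analysis.Analysis"
begin

text \<open>Vectors in R^r are modelled as real^'r; the index type 'r has r = CARD('r) elements.
  e_i is axis i 1.\<close>

definition typeI :: "real^'r \<Rightarrow> bool" where
  "typeI w \<longleftrightarrow> (\<exists>i. w = - axis i 1)"

definition typeII :: "real^'r \<Rightarrow> bool" where
  "typeII w \<longleftrightarrow> (\<exists>i j k. i \<noteq> j \<and> i \<noteq> k \<and> j \<noteq> k \<and>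
      w = axis i 1 - axis j 1 - axis k 1)"

definition typeIII :: "real^'r \<Rightarrow> bool" where
  "typeIII w \<longleftrightarrow> (\<exists>i j. i \<noteq> j \<and> w = axis i 1 - 2 *\<^sub>R axis j 1)"

definition dvec :: "('r::finite \<Rightarrow> nat) \<Rightarrow> real^'r" where
  "dvec d = (\<chi> i. real (d i))"

definition ntot :: "('r::finite \<Rightarrow> nat) \<Rightarrow> nat" where
  "ntot d = (\<Sum>i\<in>UNIV. d i)"

definition Jform :: "('r::finite \<Rightarrow> nat) \<Rightarrow> real^'r \<Rightarrow> real^'r \<Rightarrow> real" where
  "Jform d p p' = (\<Sum>i\<in>UNIV. p $ i) * (\<Sum>i\<in>UNIV. p' $ i) / (real (ntot d) - 1)
                 - (\<Sum>i\<in>UNIV. p $ i * p' $ i / real (d i))"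

definition scal :: "(real^'r) set \<Rightarrow> (real^'r \<Rightarrow> real) \<Rightarrow> real^'r \<Rightarrow> real" where
  "scal W A q = (\<Sum>w\<in>W. A w * exp (w \<bullet> q))"

definition expsum :: "(real^'r) set \<Rightarrow> (real^'r \<Rightarrow> real) \<Rightarrow> real^'r \<Rightarrow> real" where
  "expsum C F q = (\<Sum>c\<in>C. F c * exp (c \<bullet> q))"

definition superpotential ::
  "('r::finite \<Rightarrow> nat) \<Rightarrow> (real^'r) set \<Rightarrow> (real^'r \<Rightarrow> real) \<Rightarrow> (real^'r \<Rightarrow> real) \<Rightarrow> bool" where
  "superpotential d W A u \<longleftrightarrow>
     (\<forall>q. \<exists>g. (u has_derivative (\<lambda>h. g \<bullet> h)) (at q) \<and>
          Jform d g g = exp (dvec d \<bullet> q) * scal W A q)"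

end

theory Submission
  imports Defs
begin


definition sig :: "real^'r::finite \<Rightarrow> real" where "sig x = (\<Sum>i\<in>UNIV. x $ i)"

lemma sig_add[simp]: "sig (x + y) = sig x + sig y" by (simp add: sig_def sum.distrib)
lemma sig_diff[simp]: "sig (x - y) = sig x - sig y" by (simp add: sig_def sum_subtractf)
lemma sig_minus[simp]: "sig (- x) = - sig x" by (simp add: sig_def sum_negf)
lemma sig_scaleR[simp]: "sig (c *\<^sub>R x) = c * sig x" by (simp add: sig_def sum_distrib_left)
lemma sig_zero[simp]: "sig 0 = 0" by (simp add: sig_def)
lemma sig_axis[simp]: "sig (axis i (1::real)) = 1" by (simp add: sig_def axis_def)

lemma Jform_sig: "Jform d p p' = sig p * sig p' / (real (ntot d) - 1) - (\<Sum>i\<in>UNIV. p $ i * p' $ i / real (d i))"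
  by (simp add: Jform_def sig_def)

lemma Jform_sym: "Jform d x y = Jform d y x"
  by (simp add: Jform_sig mult.commute)

lemma Jform_add_left: "Jform d (x + y) z = Jform d x z + Jform d y z"
  by (simp add: Jform_sig algebra_simps add_divide_distrib sum.distrib)
lemma Jform_add_right: "Jform d z (x + y) = Jform d z x + Jform d z y"
  by (simp only: Jform_sym[of d z] Jform_add_left)
lemma Jform_scale_left: "Jform d (c *\<^sub>R x) z = c * Jform d x z"
  by (simp add: Jform_sig algebra_simps sum_distrib_left)
lemma Jform_scale_right: "Jform d z (c *\<^sub>R x) = c * Jform d z x"
  by (simp only: Jform_sym[of d z] Jform_scale_left)
lemma Jform_minus_left: "Jform d (- x) z = - Jform d x z"
  using Jform_scale_left[of d "-1" x z] by simp
lemma Jform_minus_right: "Jform d z (- x) = - Jform d z x"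
  by (simp only: Jform_sym[of d z] Jform_minus_left)
lemma Jform_diff_left: "Jform d (x - y) z = Jform d x z - Jform d y z"
  using Jform_add_left[of d x "-y" z] Jform_minus_left by simp
lemma Jform_diff_right: "Jform d z (x - y) = Jform d z x - Jform d z y"
  by (simp only: Jform_sym[of d z] Jform_diff_left)
lemma Jform_zero_left[simp]: "Jform d 0 z = 0"
  using Jform_scale_left[of d 0 z z] by simp
lemma Jform_zero_right[simp]: "Jform d z 0 = 0"
  by (simp only: Jform_sym[of d z] Jform_zero_left)

lemma Jform_sum_left: "Jform d (\<Sum>a\<in>A. f a *\<^sub>R v a) y = (\<Sum>a\<in>A. f a * Jform d (v a) y)"
proof (cases "finite A")
  case True then show ?thesis
    by (induction A rule: finite_induct) (auto simp: Jform_add_left Jform_scale_left)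
qed simp

lemma Jform_sum_right: "Jform d y (\<Sum>a\<in>A. f a *\<^sub>R v a) = (\<Sum>a\<in>A. f a * Jform d y (v a))"
  by (simp only: Jform_sym[of d y] Jform_sum_left)

lemma Jform_neg_def:
  assumes dpos: "\<And>i. d i \<ge> 1" and s: "sig x = 0" and x: "x \<noteq> 0"
  shows "Jform d x x < 0"
proof -
  obtain j where j: "x $ j \<noteq> 0" using x by (metis vec_eq_iff zero_index)
  have "(\<Sum>i\<in>UNIV. x $ i * x $ i / real (d i)) > 0"
  proof (rule sum_pos2[where i=j])
    have "0 < x $ j * x $ j" using j by (metis not_real_square_gt_zero)
    then show "0 < x $ j * x $ j / real (d j)" using dpos[of j] by (intro divide_pos_pos) auto
    show "\<And>i. i \<in> UNIV \<Longrightarrow> 0 \<le> x $ i * x $ i / real (d i)" by simp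
  qed auto
  then show ?thesis by (simp add: Jform_sig s)
qed

lemma Jform_sq_diff: "Jform d (a - b) (a - b) = Jform d a a - 2 * Jform d a b + Jform d b b"
  by (simp add: Jform_diff_left Jform_diff_right Jform_sym[of d b a])
lemma Jform_sq_add: "Jform d (a + b) (a + b) = Jform d a a + 2 * Jform d a b + Jform d b b"
  by (simp add: Jform_add_left Jform_add_right Jform_sym[of d b a])



lemma exp_indep_1d:
  fixes L :: "real set"
  assumes "finite L" "\<forall>t. (\<Sum>a\<in>L. G a * exp (a * t)) = 0"
  shows "\<forall>a\<in>L. G a = 0"
  using assms
proof (induction L rule: finite_linorder_max_induct)
  case empty then show ?case by simp
next
  case (insert b A)
  have bA: "b \<notin> A" using insert.hyps(2) by auto
  have eq: "\<And>t. G b + (\<Sum>a\<in>A. G a * exp ((a - b) * t)) = 0"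
  proof -
    fix t
    have "0 = exp (-(b*t)) * (\<Sum>a\<in>insert b A. G a * exp (a * t))" using insert.prems by simp
    also have "\<dots> = G b + (\<Sum>a\<in>A. G a * exp ((a - b) * t))"
      using bA insert.hyps(1)
      by (simp add: sum_distrib_left algebra_simps exp_add[symmetric] exp_minus_inverse)
    finally show "G b + (\<Sum>a\<in>A. G a * exp ((a - b) * t)) = 0" by simp
  qed
  have lim: "((\<lambda>t. G b + (\<Sum>a\<in>A. G a * exp ((a - b) * t))) \<longlongrightarrow> G b + (\<Sum>a\<in>A. G a * 0)) at_top"
  proof (intro tendsto_intros tendsto_sum)
    fix a assume "a \<in> A"
    then have "a - b < 0" using insert.hyps(2) by auto
    then have "filterlim (\<lambda>t. (a - b) * t) at_bot at_top"
      by (intro filterlim_tendsto_neg_mult_at_bot[where c="a-b"]) (auto intro: filterlim_ident)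
    then show "((\<lambda>t. exp ((a - b) * t)) \<longlongrightarrow> 0) at_top"
      by (rule filterlim_compose[OF exp_at_bot])
  qed
  then have "G b = 0" using eq by (simp add: tendsto_const_iff LIMSEQ_const_iff) 
  then have "\<forall>t. (\<Sum>a\<in>A. G a * exp (a * t)) = 0" using insert.prems bA insert.hyps(1) by simp
  then show ?case using insert.IH \<open>G b = 0\<close> by simp
qed



lemma exists_separating:
  fixes X :: "'a::euclidean_space set"
  assumes "finite X"
  shows "\<exists>l. inj_on (\<lambda>x. x \<bullet> l) X"
proof -
  define T where "T = (\<lambda>(x,y). {l. (x - y) \<bullet> l = 0}) ` {(x,y). x \<in> X \<and> y \<in> X \<and> x \<noteq> y}"
  have sub: "{(x,y). x \<in> X \<and> y \<in> X \<and> x \<noteq> y} \<subseteq> X \<times> X" by auto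
  have "finite {(x,y). x \<in> X \<and> y \<in> X \<and> x \<noteq> y}"
    by (rule finite_subset[OF sub]) (simp add: assms)
  then have fT: "finite T" unfolding T_def by simp
  have "negligible (\<Union>T)"
  proof (rule negligible_Union[OF fT])
    fix S assume "S \<in> T"
    then obtain x y where "x \<noteq> y" "S = {l. (x - y) \<bullet> l = 0}" unfolding T_def by auto
    then show "negligible S" by (auto intro: negligible_hyperplane)
  qed
  moreover have "\<not> negligible (UNIV :: 'a set)" by (rule open_not_negligible) auto
  ultimately obtain l where l: "l \<notin> \<Union>T" by (metis UNIV_I negligible_subset subsetI)
  have "inj_on (\<lambda>x. x \<bullet> l) X"
  proof (rule inj_onI)
    fix x y assume "x \<in> X" "y \<in> X" "x \<bullet> l = y \<bullet> l"
    show "x = y"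
    proof (rule ccontr)
      assume "x \<noteq> y"
      then have "{l. (x - y) \<bullet> l = 0} \<in> T" unfolding T_def using \<open>x\<in>X\<close> \<open>y\<in>X\<close> by auto
      moreover have "(x - y) \<bullet> l = 0" using \<open>x \<bullet> l = y \<bullet> l\<close> by (simp add: inner_diff_left)
      ultimately show False using l by auto
    qed
  qed
  then show ?thesis by blast
qed

lemma exp_indep:
  fixes X :: "'a::euclidean_space set"
  assumes fin: "finite X" and z: "\<forall>q. (\<Sum>x\<in>X. G x * exp (x \<bullet> q)) = 0"
  shows "\<forall>x\<in>X. G x = 0"
proof -
  obtain l where inj: "inj_on (\<lambda>x. x \<bullet> l) X" using exists_separating[OF fin] by blast
  define f where "f = (\<lambda>x. x \<bullet> l)"
  define H where "H = (\<lambda>a. G (the_inv_into X f a))"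
  have "\<forall>t. (\<Sum>a\<in>f ` X. H a * exp (a * t)) = 0"
  proof
    fix t
    have "(\<Sum>a\<in>f ` X. H a * exp (a * t)) = (\<Sum>x\<in>X. H (f x) * exp (f x * t))"
      using inj unfolding f_def by (simp add: sum.reindex)
    also have "\<dots> = (\<Sum>x\<in>X. G x * exp (x \<bullet> (t *\<^sub>R l)))"
      using the_inv_into_f_f[OF inj] unfolding H_def f_def by (intro sum.cong) (auto simp: mult.commute)
    also have "\<dots> = 0" using z by blast
    finally show "(\<Sum>a\<in>f ` X. H a * exp (a * t)) = 0" .
  qed
  then have "\<forall>a\<in>f ` X. H a = 0" using exp_indep_1d fin by blast
  then show ?thesis using the_inv_into_f_f[OF inj] unfolding H_def f_def by fastforce
qed



definition coef :: "('r::finite \<Rightarrow> nat) \<Rightarrow> (real^'r) set \<Rightarrow> (real^'r \<Rightarrow> real) \<Rightarrow> real^'r \<Rightarrow> real" where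
  "coef d S F \<xi> = (\<Sum>x\<in>{x\<in>S\<times>S. fst x + snd x = \<xi>}. Jform d (fst x) (snd x) * F (fst x) * F (snd x))"

lemma expsum_deriv:
  assumes "finite C"
  shows "((expsum C F) has_derivative (\<lambda>h. (\<Sum>c\<in>C. (F c * exp (c \<bullet> q)) *\<^sub>R c) \<bullet> h)) (at q)"
proof -
  have "((\<lambda>q. \<Sum>c\<in>C. F c * exp (c \<bullet> q)) has_derivative (\<lambda>h. \<Sum>c\<in>C. F c * (exp (c \<bullet> q) * (c \<bullet> h)))) (at q)"
  proof (intro has_derivative_sum has_derivative_mult_right)
    fix c
    show "((\<lambda>x. exp (c \<bullet> x)) has_derivative (\<lambda>h. exp (c \<bullet> q) * (c \<bullet> h))) (at q)"
      by (auto intro!: derivative_eq_intros simp: fun_eq_iff mult.commute)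
  qed
  moreover have "(\<lambda>h. \<Sum>c\<in>C. F c * (exp (c \<bullet> q) * (c \<bullet> h))) = (\<lambda>h. (\<Sum>c\<in>C. (F c * exp (c \<bullet> q)) *\<^sub>R c) \<bullet> h)"
    by (simp add: inner_sum_left mult.assoc)
  ultimately show ?thesis unfolding expsum_def[abs_def] by simp
qed

lemma fun_identity:
  assumes fC: "finite C" and sup: "superpotential d W A (expsum C F)"
  shows "(\<Sum>x\<in>C\<times>C. Jform d (fst x) (snd x) * F (fst x) * F (snd x) * exp ((fst x + snd x) \<bullet> q))
         = (\<Sum>w\<in>W. A w * exp ((dvec d + w) \<bullet> q))"
proof -
  define G where "G = (\<Sum>c\<in>C. (F c * exp (c \<bullet> q)) *\<^sub>R c)"
  obtain g where g1: "(expsum C F has_derivative (\<lambda>h. g \<bullet> h)) (at q)"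
     and g2: "Jform d g g = exp (dvec d \<bullet> q) * scal W A q"
    using sup unfolding superpotential_def by blast
  have "(\<lambda>h. g \<bullet> h) = (\<lambda>h. G \<bullet> h)"
    using has_derivative_unique[OF g1 expsum_deriv[OF fC]] unfolding G_def .
  then have "g \<bullet> (g - G) = G \<bullet> (g - G)" by metis
  then have "(g - G) \<bullet> (g - G) = 0" by (simp add: inner_diff_left)
  then have gG: "g = G" by simp
  have "Jform d G G = (\<Sum>a\<in>C. \<Sum>b\<in>C. Jform d a b * F a * F b * exp ((a + b) \<bullet> q))"
    unfolding G_def
    apply (subst Jform_sum_left)
    apply (subst Jform_sum_right)
    by (simp add: sum_distrib_left inner_add_left exp_add algebra_simps)
  also have "\<dots> = (\<Sum>x\<in>C\<times>C. Jform d (fst x) (snd x) * F (fst x) * F (snd x) * exp ((fst x + snd x) \<bullet> q))"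
    by (simp add: sum.cartesian_product split_beta)
  finally have L: "Jform d g g = \<dots>" using gG by simp
  have "exp (dvec d \<bullet> q) * scal W A q = (\<Sum>w\<in>W. A w * exp ((dvec d + w) \<bullet> q))"
    unfolding scal_def by (simp add: sum_distrib_left inner_add_left exp_add algebra_simps)
  with L g2 show ?thesis by simp
qed

lemma coef_identity:
  assumes fC: "finite C" and fW: "finite W" and sup: "superpotential d W A (expsum C F)"
  shows "coef d C F \<xi> = (if \<xi> - dvec d \<in> W then A (\<xi> - dvec d) else 0)"
proof -
  define s :: "(real^'a) \<times> (real^'a) \<Rightarrow> real^'a" where "s = (\<lambda>x. fst x + snd x)"
  define P where "P = C \<times> C"
  define R where "R = (\<lambda>\<xi>. if \<xi> - dvec d \<in> W then A (\<xi> - dvec d) else 0)"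
  define X where "X = s ` P \<union> (\<lambda>w. dvec d + w) ` W"
  have fP: "finite P" using fC unfolding P_def by simp
  have fX: "finite X" unfolding X_def using fP fW by simp
  have c0: "coef d C F \<xi> = 0" if "\<xi> \<notin> s ` P" for \<xi>
  proof -
    have e: "{x\<in>C\<times>C. fst x + snd x = \<xi>} = {}" using that unfolding s_def P_def by force
    show ?thesis unfolding coef_def e by simp
  qed
  have "\<forall>q. (\<Sum>\<xi>\<in>X. (coef d C F \<xi> - R \<xi>) * exp (\<xi> \<bullet> q)) = 0"
  proof
    fix q
    have "(\<Sum>\<xi>\<in>X. coef d C F \<xi> * exp (\<xi> \<bullet> q)) = (\<Sum>\<xi>\<in>s ` P. coef d C F \<xi> * exp (\<xi> \<bullet> q))"
      using fX c0 by (intro sum.mono_neutral_right) (auto simp: X_def)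
    also have "\<dots> = (\<Sum>\<xi>\<in>s ` P. \<Sum>x\<in>{x\<in>P. s x = \<xi>}. Jform d (fst x) (snd x) * F (fst x) * F (snd x) * exp ((fst x + snd x) \<bullet> q))"
      unfolding coef_def P_def s_def by (intro sum.cong refl) (auto simp: sum_distrib_right)
    also have "\<dots> = (\<Sum>x\<in>P. Jform d (fst x) (snd x) * F (fst x) * F (snd x) * exp ((fst x + snd x) \<bullet> q))"
      using sum.image_gen[OF fP, of _ s, symmetric] by simp
    also have "\<dots> = (\<Sum>w\<in>W. A w * exp ((dvec d + w) \<bullet> q))"
      unfolding P_def by (rule fun_identity[OF fC sup])
    also have "\<dots> = (\<Sum>\<xi>\<in>(\<lambda>w. dvec d + w) ` W. R \<xi> * exp (\<xi> \<bullet> q))"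
      by (subst sum.reindex) (auto simp: inj_on_def R_def)
    also have "\<dots> = (\<Sum>\<xi>\<in>X. R \<xi> * exp (\<xi> \<bullet> q))"
      using fX apply (intro sum.mono_neutral_left)
        apply (auto simp: X_def R_def)
      by (metis add.commute diff_add_cancel rev_image_eqI)
    finally show "(\<Sum>\<xi>\<in>X. (coef d C F \<xi> - R \<xi>) * exp (\<xi> \<bullet> q)) = 0"
      by (simp add: left_diff_distrib sum_subtractf)
  qed
  then have "\<forall>\<xi>\<in>X. coef d C F \<xi> - R \<xi> = 0" by (rule exp_indep[OF fX])
  moreover have "R \<xi> = 0" if "\<xi> \<notin> X" for \<xi> using that unfolding R_def X_def
    by (metis (no_types, lifting) UnCI add.commute diff_add_cancel rev_image_eqI)
  ultimately have "coef d C F \<xi> = R \<xi>" using c0 unfolding X_def by (metis UnCI eq_iff_diff_eq_0)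
  then show ?thesis unfolding R_def .
qed



lemma finite_argmin:
  fixes f :: "'a \<Rightarrow> real"
  assumes "finite A" "A \<noteq> {}" shows "\<exists>x\<in>A. \<forall>y\<in>A. f x \<le> f y"
proof -
  have "Min (f ` A) \<in> f ` A" using assms by simp
  then obtain x where x: "x \<in> A" "f x = Min (f ` A)" by auto
  have "\<forall>y\<in>A. f x \<le> f y" using x assms by simp
  then show ?thesis using x by blast
qed

lemma finite_argmax:
  fixes f :: "'a \<Rightarrow> real"
  assumes "finite A" "A \<noteq> {}" shows "\<exists>x\<in>A. \<forall>y\<in>A. f y \<le> f x"
proof -
  have "Max (f ` A) \<in> f ` A" using assms by simp
  then obtain x where x: "x \<in> A" "f x = Max (f ` A)" by auto
  have "\<forall>y\<in>A. f y \<le> f x" using x assms by simp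
  then show ?thesis using x by blast
qed

lemma coef_single:
  assumes "{x\<in>S\<times>S. fst x + snd x = \<xi>} = {(p,p)}"
  shows "coef d S F \<xi> = Jform d p p * F p * F p"
  unfolding coef_def assms by simp

lemma coef_two:
  assumes "{x\<in>S\<times>S. fst x + snd x = \<xi>} = {(p,a),(a,p)}" "a \<noteq> p"
  shows "coef d S F \<xi> = 2 * Jform d p a * F p * F a"
  unfolding coef_def assms(1) using assms(2) by (simp add: Jform_sym[of d a p])

lemma vec_half: "(a::real^'r) + a = p + p \<Longrightarrow> a = p"
  by (simp add: vec_eq_iff)

lemma top_lemma:
  fixes d :: "'r::finite \<Rightarrow> nat" and S :: "(real^'r) set" and F :: "real^'r \<Rightarrow> real" and N :: real
  assumes dpos: "\<And>i. d i \<ge> 1" and fin: "finite S" and Fnz: "\<And>c. c \<in> S \<Longrightarrow> F c \<noteq> 0"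
    and coef0: "\<And>\<xi>. sig \<xi> \<noteq> N \<Longrightarrow> coef d S F \<xi> = 0"
    and ex: "\<exists>c\<in>S. sig c > N/2"
  shows "\<exists>p\<in>S. (\<forall>c\<in>S. c \<noteq> p \<longrightarrow> sig c < sig p) \<and> Jform d p p = 0
             \<and> (\<forall>c\<in>S. sig c > N - sig p \<longrightarrow> Jform d p c = 0)"
proof -
  have Sne: "S \<noteq> {}" using ex by auto
  obtain m where mS: "m \<in> S" and mmax: "\<forall>c\<in>S. sig c \<le> sig m" using finite_argmax[OF fin Sne] by blast
  define M where "M = sig m"
  have Mge: "\<And>c. c \<in> S \<Longrightarrow> sig c \<le> M" using mmax M_def by auto
  have MN: "M > N/2" using ex Mge by force
  define T where "T = {c\<in>S. sig c = M}"
  have fT: "finite T" using fin T_def by simp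
  have mT: "m \<in> T" using mS M_def T_def by simp
  obtain p where pT: "p \<in> T" and pmin: "\<forall>c\<in>T. Jform d p p \<le> Jform d c c"
    using finite_argmin[OF fT, of "\<lambda>c. Jform d c c"] mT by blast
  have pS: "p \<in> S" and sp: "sig p = M" using pT T_def by auto
  have neg: "Jform d (a - b) (a - b) < 0" if "sig a = sig b" "a \<noteq> b" for a b
    using Jform_neg_def[of d "a - b"] dpos that by simp
  have "{x\<in>S\<times>S. fst x + snd x = p + p} = {(p,p)}"
  proof (rule set_eqI, rule iffI)
    fix x assume x: "x \<in> {x\<in>S\<times>S. fst x + snd x = p + p}"
    define a where "a = fst x"
    define b where "b = snd x"
    have aS: "a \<in> S" and bS: "b \<in> S" and ab: "a + b = p + p" using x a_def b_def by auto
    have "sig a + sig b = 2 * M" using arg_cong[OF ab, of sig] sp by (simp only: sig_add, (linarith)?)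
    then have sa: "sig a = M" and sb: "sig b = M" using Mge[OF aS] Mge[OF bS] by auto
    have "a = b"
    proof (rule ccontr)
      assume "a \<noteq> b"
      then have "Jform d (a - b) (a - b) < 0" using neg sa sb by simp
      moreover have "Jform d (a + b) (a + b) = 4 * Jform d p p"
      proof -
        have "Jform d (a + b) (a + b) = Jform d (p + p) (p + p)" by (simp only: ab)
        then show ?thesis using Jform_sq_add[of d p p] by linarith
      qed
      moreover have "Jform d p p \<le> Jform d a a" "Jform d p p \<le> Jform d b b"
        using pmin aS bS sa sb T_def by auto
      ultimately show False using Jform_sq_add[of d a b] Jform_sq_diff[of d a b] by linarith
    qed
    then have "a = p" using ab vec_half by blast
    then show "x \<in> {(p,p)}" using \<open>a = b\<close> a_def b_def by (simp add: prod_eq_iff)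
  qed (use pS in auto)
  then have "coef d S F (p + p) = Jform d p p * F p * F p" by (rule coef_single)
  moreover have "coef d S F (p + p) = 0" using coef0[of "p + p"] sp MN by (simp only: sig_add, (linarith)?)
  ultimately have Jpp: "Jform d p p = 0" using Fnz[OF pS] by simp
  have Jpos: "Jform d p a > 0" if "a \<in> T" "a \<noteq> p" for a
  proof -
    have "Jform d (a - p) (a - p) < 0" using neg that sp T_def by simp
    moreover have "Jform d p p \<le> Jform d a a" using pmin that by auto
    ultimately show ?thesis using Jform_sq_diff[of d a p] Jform_sym[of d a p] Jpp by linarith
  qed
  have uniq: "\<forall>c\<in>S. c \<noteq> p \<longrightarrow> sig c < sig p"
  proof (rule ccontr)
    assume "\<not> ?thesis"
    then obtain c where "c \<in> S" "c \<noteq> p" "sig c \<ge> sig p" by force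
    then have cT: "c \<in> T - {p}" using Mge sp T_def by force
    obtain a where aT: "a \<in> T - {p}" and amin: "\<forall>y\<in>T - {p}. Jform d p a \<le> Jform d p y"
      using finite_argmin[of "T - {p}" "\<lambda>y. Jform d p y"] fT cT by blast
    have ap: "a \<noteq> p" and aS: "a \<in> S" and sa: "sig a = M" using aT T_def by auto
    have Ja: "Jform d p a > 0" using Jpos aT by auto
    have "{x\<in>S\<times>S. fst x + snd x = p + a} = {(p,a),(a,p)}"
    proof (rule set_eqI, rule iffI)
      fix x assume x: "x \<in> {x\<in>S\<times>S. fst x + snd x = p + a}"
      define b where "b = fst x"
      define b' where "b' = snd x"
      have bS: "b \<in> S" and b'S: "b' \<in> S" and bb: "b + b' = p + a" using x b_def b'_def by auto
      have "sig b + sig b' = 2 * M" using arg_cong[OF bb, of sig] sp sa by (simp only: sig_add, (linarith)?)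
      then have sb: "sig b = M" and sb': "sig b' = M" using Mge[OF bS] Mge[OF b'S] by auto
      have "b = p \<or> b' = p"
      proof (rule ccontr)
        assume "\<not> ?thesis"
        then have "b \<in> T - {p}" "b' \<in> T - {p}" using bS b'S sb sb' T_def by auto
        then have "Jform d p a \<le> Jform d p b" "Jform d p a \<le> Jform d p b'" using amin by auto
        moreover have "Jform d p b + Jform d p b' = Jform d p a"
          using arg_cong[OF bb, of "Jform d p"] Jform_add_right[of d p] Jpp by simp
        ultimately show False using Ja by linarith
      qed
      then have "(b = p \<and> b' = a) \<or> (b' = p \<and> b = a)" using bb by auto
      then show "x \<in> {(p,a),(a,p)}" using b_def b'_def by (auto simp: prod_eq_iff)
    qed (use pS aS in \<open>auto simp: add.commute\<close>)
    then have "coef d S F (p + a) = 2 * Jform d p a * F p * F a" using ap by (rule coef_two)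
    moreover have "coef d S F (p + a) = 0" using coef0 sp sa MN by simp
    ultimately show False using Fnz[OF pS] Fnz[OF aS] Ja by simp
  qed
  have orth: "\<forall>c\<in>S. sig c > N - sig p \<longrightarrow> Jform d p c = 0"
  proof (rule ccontr)
    define B where "B = {c\<in>S. sig c > N - M \<and> Jform d p c \<noteq> 0}"
    assume "\<not> ?thesis"
    then have Bne: "B \<noteq> {}" using B_def sp by auto
    obtain c where cB: "c \<in> B" and cmax: "\<forall>y\<in>B. sig y \<le> sig c"
      using finite_argmax[of B sig] fin Bne B_def by auto
    have cS: "c \<in> S" and sc: "sig c > N - M" and Jc: "Jform d p c \<noteq> 0" using cB B_def by auto
    have cp: "c \<noteq> p" using Jc Jpp by auto
    have "{x\<in>S\<times>S. fst x + snd x = p + c} = {(p,c),(c,p)}"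
    proof (rule set_eqI, rule iffI)
      fix x assume x: "x \<in> {x\<in>S\<times>S. fst x + snd x = p + c}"
      define a where "a = fst x"
      define b where "b = snd x"
      have aS: "a \<in> S" and bS: "b \<in> S" and ab: "a + b = p + c" using x a_def b_def by auto
      have sab: "sig a + sig b = M + sig c" using arg_cong[OF ab, of sig] sp by (simp only: sig_add, (linarith)?)
      have "a = p \<or> b = p"
      proof (rule ccontr)
        assume "\<not> ?thesis"
        then have "sig a < M" "sig b < M" using uniq aS bS sp by auto
        then have "sig a > sig c" "sig b > sig c" using sab by auto
        then have "a \<notin> B" "b \<notin> B" using cmax by force+
        then have "Jform d p a = 0" "Jform d p b = 0"
          using aS bS \<open>sig a > sig c\<close> \<open>sig b > sig c\<close> sc B_def by auto
        moreover have "Jform d p a + Jform d p b = Jform d p c"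
          using arg_cong[OF ab, of "Jform d p"] Jform_add_right[of d p] Jpp by simp
        ultimately show False using Jc by simp
      qed
      then have "(a = p \<and> b = c) \<or> (b = p \<and> a = c)" using ab by auto
      then show "x \<in> {(p,c),(c,p)}" using a_def b_def by (auto simp: prod_eq_iff)
    qed (use pS cS in \<open>auto simp: add.commute\<close>)
    then have "coef d S F (p + c) = 2 * Jform d p c * F p * F c" using cp by (rule coef_two)
    moreover have "coef d S F (p + c) = 0" using coef0 sp sc by simp
    ultimately show False using Fnz[OF pS] Fnz[OF cS] Jc by simp
  qed
  show ?thesis using pS uniq Jpp orth by blast
qed



lemma neg_sum: "(a::real^'r::finite) + b = - \<xi> \<Longrightarrow> - a - b = \<xi>" by (simp add: vec_eq_iff) (metis add.commute minus_add_cancel add_uminus_conv_diff minus_add_distrib minus_minus)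

lemma coef_neg: "coef d (uminus ` S) (\<lambda>c. F (- c)) \<xi> = coef d S F (- \<xi>)"
  unfolding coef_def
proof (rule sum.reindex_bij_witness[where i="\<lambda>x. (- fst x, - snd x)" and j="\<lambda>x. (- fst x, - snd x)"])
  fix x assume x: "x \<in> {x \<in> S \<times> S. fst x + snd x = - \<xi>}"
  then show "(- fst (- fst x, - snd x), - snd (- fst x, - snd x)) = x" by simp
  show "(- fst x, - snd x) \<in> {x \<in> uminus ` S \<times> uminus ` S. fst x + snd x = \<xi>}"
    using x by (auto intro: neg_sum)
next
  fix x assume x: "x \<in> {x \<in> uminus ` S \<times> uminus ` S. fst x + snd x = \<xi>}"
  then show "(- fst (- fst x, - snd x), - snd (- fst x, - snd x)) = x" by simp
  show "(- fst x, - snd x) \<in> {x \<in> S \<times> S. fst x + snd x = - \<xi>}"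
    using x by (auto simp: minus_add_distrib[symmetric])
  show "Jform d (fst (- fst x, - snd x)) (snd (- fst x, - snd x)) * F (fst (- fst x, - snd x)) * F (snd (- fst x, - snd x))
     = Jform d (fst x) (snd x) * F (- fst x) * F (- snd x)"
    by (simp add: Jform_minus_left Jform_minus_right)
qed

lemma sig_types:
  assumes "typeI w \<or> typeII w \<or> typeIII w" shows "sig w = -1"
  using assms unfolding typeI_def typeII_def typeIII_def by auto

lemma sig_dvec: "sig (dvec d) = real (ntot d)"
  by (simp add: sig_def dvec_def ntot_def)

lemma ntot_ge: fixes d :: "'r::finite \<Rightarrow> nat" assumes "\<And>i. d i \<ge> 1" shows "ntot d \<ge> CARD('r)"
proof -
  have "(\<Sum>i\<in>(UNIV::'r set). (1::nat)) \<le> (\<Sum>i\<in>UNIV. d i)"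
    using sum_mono[of "UNIV::'r set" "\<lambda>i. (1::nat)" d] assms by simp
  then show ?thesis by (simp add: ntot_def)
qed

lemma no_orth:
  fixes d :: "'r::finite \<Rightarrow> nat" and W :: "(real^'r) set"
  assumes r2: "CARD('r) \<ge> 2" and dpos: "\<And>i. d i \<ge> 1"
    and Wtypes: "\<And>w. w \<in> W \<Longrightarrow> typeI w \<or> typeII w \<or> typeIII w"
    and dimW: "aff_dim (convex hull W) = int CARD('r) - 1"
    and z: "z \<noteq> 0" and orth: "\<forall>w\<in>W. Jform d z (dvec d + w) = 0"
  shows False
proof -
  define N where "N = real (ntot d) - 1"
  have "ntot d \<ge> CARD('r)" by (rule ntot_ge) (rule dpos)
  then have Npos: "N > 0" using r2 unfolding N_def by linarith
  define y :: "real^'r" where "y = (\<chi> i. sig z / N - z $ i / real (d i))"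
  have Jy: "Jform d z x = y \<bullet> x" for x
  proof -
    have "y \<bullet> x = (\<Sum>i\<in>UNIV. (sig z / N) * x $ i - z $ i * x $ i / real (d i))"
      unfolding y_def inner_vec_def by (simp add: algebra_simps)
    also have "\<dots> = sig z / N * sig x - (\<Sum>i\<in>UNIV. z $ i * x $ i / real (d i))"
      by (simp add: sum_subtractf sum_distrib_left sig_def)
    finally show ?thesis by (simp add: Jform_sig N_def)
  qed
  have yne: "y \<noteq> 0"
  proof
    assume y0: "y = 0"
    have e: "sig z / N - z $ i / real (d i) = 0" for i using y0 unfolding y_def by (simp add: vec_eq_iff)
    have zi: "z $ i = real (d i) * sig z / N" for i
    proof -
      have di: "real (d i) > 0" using dpos[of i] by simp
      show ?thesis using e[of i] di Npos by (simp add: field_simps)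
    qed
    have "sig z = (\<Sum>i\<in>UNIV. z $ i)" by (simp only: sig_def)
    also have "\<dots> = (\<Sum>i\<in>UNIV. real (d i) * sig z / N)" by (rule sum.cong) (simp_all only: zi)
    also have "\<dots> = (\<Sum>i\<in>UNIV. real (d i)) * sig z / N" by (simp add: sum_distrib_right sum_divide_distrib)
    finally have "sig z = (\<Sum>i\<in>UNIV. real (d i)) * sig z / N" .
    also have "(\<Sum>i\<in>UNIV. real (d i)) = N + 1" unfolding N_def ntot_def by simp
    finally have "sig z * N = (N + 1) * sig z" using Npos by (simp add: field_simps)
    then have "sig z = 0" by (simp add: algebra_simps)
    then have "z = 0" using zi by (simp add: vec_eq_iff)
    then show False using z by simp
  qed
  have Wne: "W \<noteq> {}"
  proof
    assume "W = {}"
    then have "aff_dim (convex hull W) = -1" by simp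
    then show False using dimW r2 by simp
  qed
  define one :: "real^'r" where "one = (\<chi> i. 1)"
  have one_inner: "one \<bullet> x = sig x" for x unfolding one_def inner_vec_def sig_def by simp
  have one_ne: "one \<noteq> 0" unfolding one_def by (simp add: vec_eq_iff)
  define c where "c = - (y \<bullet> dvec d)"
  define H where "H = {x. one \<bullet> x = -1}"
  have WH: "W \<subseteq> H \<inter> {x. y \<bullet> x = c}"
  proof
    fix w assume w: "w \<in> W"
    have "one \<bullet> w = -1" using sig_types[OF Wtypes[OF w]] one_inner by simp
    moreover have "y \<bullet> w = c"
    proof -
      have "y \<bullet> dvec d + y \<bullet> w = 0" using orth w Jy by (simp add: inner_add_right)
      then show ?thesis unfolding c_def by linarith
    qed
    ultimately show "w \<in> H \<inter> {x. y \<bullet> x = c}" unfolding H_def by simp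
  qed
  have affH: "affine H" unfolding H_def by (rule affine_hyperplane)
  have adH: "aff_dim H = int CARD('r) - 1" unfolding H_def using one_ne by simp
  show False
  proof (cases "H \<subseteq> {v. y \<bullet> v = c}")
    case True
    have yi: "y $ i = - c" for i
    proof -
      have "- axis i 1 \<in> H" unfolding H_def by (simp add: one_inner)
      then have "y \<bullet> (- axis i 1) = c" using True by auto
      then show ?thesis by (simp add: inner_axis)
    qed
    obtain w where w: "w \<in> W" using Wne by auto
    have "y \<bullet> (dvec d + w) = - c * sig (dvec d + w)"
      using yi unfolding inner_vec_def sig_def by (simp add: sum_distrib_left)
    also have "sig (dvec d + w) = N"
      using sig_types[OF Wtypes[OF w]] sig_dvec unfolding N_def by simp
    finally have "y \<bullet> (dvec d + w) = - c * N" .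
    moreover have "y \<bullet> (dvec d + w) = 0" using orth w Jy by simp
    ultimately have "c = 0" using Npos by simp
    then have "y = 0" using yi by (simp add: vec_eq_iff)
    then show False using yne by simp
  next
    case False
    have "aff_dim W \<le> aff_dim (H \<inter> {x. y \<bullet> x = c})" using WH by (rule aff_dim_subset)
    also have "\<dots> \<le> aff_dim H - 1"
      using aff_dim_affine_Int_hyperplane[OF affH, of y c] False adH r2 by auto
    finally have "aff_dim W \<le> int CARD('r) - 2" using adH by simp
    moreover have "aff_dim W = int CARD('r) - 1" using dimW by (simp add: aff_dim_convex_hull)
    ultimately show False by simp
  qed
qed



theorem theorem1p5:
  fixes d :: "'r::finite \<Rightarrow> nat"
    and W :: "(real^'r) set" and A :: "real^'r \<Rightarrow> real"
    and C :: "(real^'r) set" and F :: "real^'r \<Rightarrow> real"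
  assumes r2: "CARD('r) \<ge> 2"
    and dpos: "\<And>i. d i \<ge> 1"
    and Wfin: "finite W"
    and Wtypes: "\<And>w. w \<in> W \<Longrightarrow> typeI w \<or> typeII w \<or> typeIII w"
    and Anz: "\<And>w. w \<in> W \<Longrightarrow> A w \<noteq> 0"
    and ApI: "\<And>w. w \<in> W \<Longrightarrow> typeI w \<Longrightarrow> A w > 0"
    and AnII: "\<And>w. w \<in> W \<Longrightarrow> typeII w \<Longrightarrow> A w < 0"
    and AnIII: "\<And>w. w \<in> W \<Longrightarrow> typeIII w \<Longrightarrow> A w < 0"
    and dimW: "aff_dim (convex hull W) = int CARD('r) - 1"
    and Cfin: "finite C"
    and Fnz: "\<And>c. c \<in> C \<Longrightarrow> F c \<noteq> 0"
    and sup: "superpotential d W A (expsum C F)"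
  shows "\<forall>c\<in>C. c \<noteq> 0 \<longrightarrow> (\<Sum>i\<in>UNIV. c $ i) = (real (ntot d) - 1) / 2"
proof -
  define N where "N = real (ntot d) - 1"
  define S where "S = C - {0}"
  have finS: "finite S" using Cfin S_def by simp
  have FS: "\<And>c. c \<in> S \<Longrightarrow> F c \<noteq> 0" using Fnz S_def by simp
  have coefS: "coef d S F \<xi> = coef d C F \<xi>" for \<xi>
    unfolding coef_def
  proof (rule sum.mono_neutral_left)
    show "finite {x \<in> C \<times> C. fst x + snd x = \<xi>}" using Cfin by simp
    show "{x \<in> S \<times> S. fst x + snd x = \<xi>} \<subseteq> {x \<in> C \<times> C. fst x + snd x = \<xi>}" using S_def by auto
    show "\<forall>x\<in>{x \<in> C \<times> C. fst x + snd x = \<xi>} - {x \<in> S \<times> S. fst x + snd x = \<xi>}.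
            Jform d (fst x) (snd x) * F (fst x) * F (snd x) = 0"
      using S_def by auto
  qed
  have coefR: "coef d S F \<xi> = (if \<xi> - dvec d \<in> W then A (\<xi> - dvec d) else 0)" for \<xi>
    using coefS coef_identity[OF Cfin Wfin sup] by simp
  have sigdw: "sig (dvec d + w) = N" if "w \<in> W" for w
    using sig_types[OF Wtypes[OF that]] sig_dvec unfolding N_def by simp
  have coef0: "coef d S F \<xi> = 0" if "sig \<xi> \<noteq> N" for \<xi>
  proof -
    have "\<xi> - dvec d \<notin> W"
    proof
      assume "\<xi> - dvec d \<in> W"
      then have "sig (dvec d + (\<xi> - dvec d)) = N" by (rule sigdw)
      then show False using that by simp
    qed
    then show ?thesis using coefR by simp
  qed
  have pairs: "\<exists>a\<in>S. \<exists>b\<in>S. a + b = dvec d + w" if w: "w \<in> W" for w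
  proof (rule ccontr)
    assume "\<not> ?thesis"
    then have "{x \<in> S \<times> S. fst x + snd x = dvec d + w} = {}" by auto
    then have "coef d S F (dvec d + w) = 0" unfolding coef_def by (simp only: sum.empty)
    moreover have "coef d S F (dvec d + w) = A w" using coefR[of "dvec d + w"] w by simp
    ultimately show False using Anz[OF w] by simp
  qed
  have noorth: "False" if "z \<noteq> 0" "\<forall>x\<in>S. Jform d z x = 0" for z
  proof (rule no_orth[OF r2 dpos Wtypes dimW \<open>z \<noteq> 0\<close>])
    show "\<forall>w\<in>W. Jform d z (dvec d + w) = 0"
    proof
      fix w assume "w \<in> W"
      then obtain a b where "a \<in> S" "b \<in> S" "a + b = dvec d + w" using pairs by blast
      then show "Jform d z (dvec d + w) = 0" using that(2) by (metis Jform_add_right add.right_neutral)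
    qed
  qed
  have up: "\<exists>p\<in>S. (\<forall>c\<in>S. c \<noteq> p \<longrightarrow> sig c < sig p) \<and> sig p > N/2 \<and> Jform d p p = 0
             \<and> (\<forall>c\<in>S. sig c > N - sig p \<longrightarrow> Jform d p c = 0) \<and> (\<exists>a\<in>S. Jform d p a \<noteq> 0)"
    if ex: "\<exists>c\<in>S. sig c > N/2"
  proof -
    obtain p where pS: "p \<in> S" and u: "\<forall>c\<in>S. c \<noteq> p \<longrightarrow> sig c < sig p" and J0: "Jform d p p = 0"
      and o: "\<forall>c\<in>S. sig c > N - sig p \<longrightarrow> Jform d p c = 0"
      using top_lemma[OF dpos finS FS coef0 ex] by blast
    have "sig p > N/2" using ex u by force
    moreover have "\<exists>a\<in>S. Jform d p a \<noteq> 0"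
      using noorth[of p] pS S_def by auto
    ultimately show ?thesis using pS u J0 o by blast
  qed
  have down: "\<exists>q\<in>S. (\<forall>c\<in>S. c \<noteq> q \<longrightarrow> sig c > sig q) \<and> sig q < N/2 \<and> Jform d q q = 0
             \<and> (\<forall>c\<in>S. sig c < N - sig q \<longrightarrow> Jform d q c = 0) \<and> (\<exists>b\<in>S. Jform d q b \<noteq> 0)"
    if ex: "\<exists>c\<in>S. sig c < N/2"
  proof -
    define S' where "S' = uminus ` S"
    define F' where "F' = (\<lambda>c. F (- c))"
    have finS': "finite S'" using finS S'_def by simp
    have FS': "F' c \<noteq> 0" if "c \<in> S'" for c using that FS unfolding S'_def F'_def by auto
    have coef0': "coef d S' F' \<xi> = 0" if "sig \<xi> \<noteq> - N" for \<xi>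
      unfolding S'_def F'_def coef_neg using coef0[of "- \<xi>"] that by simp
    have ex': "\<exists>c\<in>S'. sig c > - N/2" using ex unfolding S'_def by force
    obtain q' where qS: "q' \<in> S'" and u: "\<forall>c\<in>S'. c \<noteq> q' \<longrightarrow> sig c < sig q'" and J0: "Jform d q' q' = 0"
      and o: "\<forall>c\<in>S'. sig c > - N - sig q' \<longrightarrow> Jform d q' c = 0"
      using top_lemma[OF dpos finS' FS' coef0' ex'] by blast
    define q where "q = - q'"
    have qS: "q \<in> S" using qS q_def S'_def by auto
    have mS: "- c \<in> S'" if "c \<in> S" for c using that S'_def by auto
    have u2: "\<forall>c\<in>S. c \<noteq> q \<longrightarrow> sig c > sig q"
    proof (intro ballI impI)
      fix c assume "c \<in> S" "c \<noteq> q"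
      then have m1: "- c \<in> S'" "- c \<noteq> q'" using mS q_def by auto
      then have "sig (- c) < sig q'" using u by blast
      then show "sig c > sig q" using q_def by simp
    qed
    have J02: "Jform d q q = 0" using J0 q_def by (simp add: Jform_minus_left Jform_minus_right)
    have o2: "\<forall>c\<in>S. sig c < N - sig q \<longrightarrow> Jform d q c = 0"
    proof (intro ballI impI)
      fix c assume "c \<in> S" "sig c < N - sig q"
      then have "Jform d q' (- c) = 0" using o mS q_def by auto
      then show "Jform d q c = 0" using q_def by (simp add: Jform_minus_left Jform_minus_right)
    qed
    have "sig q < N/2" using ex u2 by force
    moreover have "\<exists>b\<in>S. Jform d q b \<noteq> 0"
      using noorth[of q] qS S_def by auto
    ultimately show ?thesis using qS u2 J02 o2 by blast
  qed
  have main: "sig c = N/2" if cS: "c \<in> S" for c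
  proof (rule ccontr)
    assume nc: "sig c \<noteq> N/2"
    have hi_lo: "(\<exists>c\<in>S. sig c > N/2) \<and> (\<exists>c\<in>S. sig c < N/2)"
    proof (cases "sig c > N/2")
      case True
      then have h: "\<exists>c\<in>S. sig c > N/2" using cS by blast
      then obtain p a where "p \<in> S" "sig p > N/2" "\<forall>c\<in>S. sig c > N - sig p \<longrightarrow> Jform d p c = 0"
        "a \<in> S" "Jform d p a \<noteq> 0" using up by blast
      then have "sig a < N/2" by force
      then show ?thesis using h \<open>a \<in> S\<close> by blast
    next
      case False
      then have h: "\<exists>c\<in>S. sig c < N/2" using cS nc by force
      then obtain q b where "q \<in> S" "sig q < N/2" "\<forall>c\<in>S. sig c < N - sig q \<longrightarrow> Jform d q c = 0"
        "b \<in> S" "Jform d q b \<noteq> 0" using down by blast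
      then have "sig b > N/2" by force
      then show ?thesis using h \<open>b \<in> S\<close> by blast
    qed
    obtain p a where pS: "p \<in> S" and pu: "\<forall>c\<in>S. c \<noteq> p \<longrightarrow> sig c < sig p" and sp: "sig p > N/2"
      and Jpp: "Jform d p p = 0" and po: "\<forall>c\<in>S. sig c > N - sig p \<longrightarrow> Jform d p c = 0"
      and aS: "a \<in> S" and Ja: "Jform d p a \<noteq> 0"
      using up hi_lo by blast
    obtain q b where qS: "q \<in> S" and qu: "\<forall>c\<in>S. c \<noteq> q \<longrightarrow> sig c > sig q" and sq: "sig q < N/2"
      and Jqq: "Jform d q q = 0" and qo: "\<forall>c\<in>S. sig c < N - sig q \<longrightarrow> Jform d q c = 0"
      and bS: "b \<in> S" and Jb: "Jform d q b \<noteq> 0"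
      using down hi_lo by blast
    have "sig a \<le> N - sig p" using po aS Ja by force
    moreover have "sig a \<ge> sig q" using qu aS by (cases "a = q") force+
    moreover have "sig b \<ge> N - sig q" using qo bS Jb by force
    moreover have "sig b \<le> sig p" using pu bS by (cases "b = p") force+
    ultimately have MN: "sig p + sig q = N" by linarith
    have pq: "p - q \<noteq> 0" using sp sq by auto
    have Zp: "Jform d p x = 0" if "x \<in> S" "x \<noteq> q" for x
      using po qu that MN by force
    have Zq: "Jform d q x = 0" if "x \<in> S" "x \<noteq> p" for x
      using qo pu that MN by force
    have orthw: "\<forall>w\<in>W. Jform d (p - q) (dvec d + w) = 0"
    proof
      fix w assume w: "w \<in> W"
      obtain a b where aS: "a \<in> S" and bS: "b \<in> S" and ab: "a + b = dvec d + w" using pairs[OF w] by blast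
      have sab: "sig a + sig b = N" using sigdw[OF w] arg_cong[OF ab, of sig] by simp
      have e: "Jform d (p - q) (dvec d + w) = Jform d p a + Jform d p b - Jform d q a - Jform d q b"
        unfolding ab[symmetric] by (simp add: Jform_diff_left Jform_add_right)
      have sym: "Jform d q p = Jform d p q" by (rule Jform_sym)
      show "Jform d (p - q) (dvec d + w) = 0"
      proof (cases "a = p")
        case True
        then have "sig b = sig q" using sab MN by simp
        then have "b = q" using qu bS by force
        then show ?thesis using e True Jpp Jqq sym by simp
      next
        case anp: False
        show ?thesis
        proof (cases "a = q")
          case True
          then have "sig b = sig p" using sab MN by simp
          then have "b = p" using pu bS by force
          then show ?thesis using e True Jpp Jqq sym by simp
        next
          case anq: False
          have "b \<noteq> p"
          proof
            assume "b = p" then have "sig a = sig q" using sab MN by simp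
            then show False using qu aS anq by force
          qed
          moreover have "b \<noteq> q"
          proof
            assume "b = q" then have "sig a = sig p" using sab MN by simp
            then show False using pu aS anp by force
          qed
          ultimately show ?thesis using e Zp Zq aS bS anp anq by simp
        qed
      qed
    qed
    show False by (rule no_orth[OF r2 dpos Wtypes dimW pq orthw])
  qed
  show ?thesis using main unfolding S_def N_def sig_def by auto
qed

end
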